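(* Let $m,n,a$ be integers satisfying $0\le a\le m\le n$. Then $$B_m=(-1)^{a}\sum_{k=1}^{n+1}\frac{(-1)^{k+1}}{k}\binom{n+1}{k}\left[\sum_{i=1}^{k-1}i^a(k-i)^{m-a}+\delta_{a,m}\,k^m\right],$$ where $\delta_{a,m}$ is the Kronecker delta. Furthermore, if $m\ge 2$, then $$B_m=(-1)^{a}\sum_{k=1}^{n+1}\frac{(-1)^{k+1}}{k}\binom{n+1}{k}\sum_{i=1}^{k-1}i^a(k-i)^{m-a}.$$
   Context: The Bernoulli numbers $B_m$ ($m\ge 0$) are defined by the generating function $\frac{x}{e^x-1}=\sum_{m=0}^{\infty}\frac{B_m}{m!}x^m$ (so $B_1=-1/2$). An empty sum (e.g. $\sum_{i=1}^{0}$) is $0$; in the sums all bases $i$, $k-i$, $k$ are positive integers, and $t^0=1$. *)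

theory Defs
  imports "HOL-Computational_Algebra.Formal_Power_Series"
begin

text \<open>Bernoulli numbers via the generating function x/(e^x - 1) = sum B_m x^m / m!,
  so that B_1 = -1/2.  The quotient is taken in the field of formal power series.\<close>
definition bernoulli :: "nat \<Rightarrow> real" where
  "bernoulli m = fact m * fps_nth (fps_X / (fps_exp 1 - 1)) m"

end

theory Submission
  imports Defs
begin

definition Gf :: "real fps" where "Gf = Abs_fps (\<lambda>n. 1 / fact (n+1))"
definition Ef :: "real \<Rightarrow> real fps" where "Ef c = Abs_fps (\<lambda>n. c^(n+1) / fact (n+1))"
definition beta :: "nat \<Rightarrow> real" where "beta l = fps_nth (fps_X / (fps_exp 1 - 1)) l"

lemma Ef_eq: "fps_exp (c::real) - 1 = fps_X * Ef c"
proof (rule fps_ext)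
  fix n show "fps_nth (fps_exp c - 1) n = fps_nth (fps_X * Ef c) n"
    by (cases n) (simp_all add: Ef_def algebra_simps)
qed

lemma Gf_eq: "fps_exp (1::real) - 1 = fps_X * Gf"
  using Ef_eq[of 1] by (simp add: Ef_def Gf_def)

lemma beta_Gf: "fps_X / (fps_exp (1::real) - 1) * Gf = 1"
proof -
  have "fps_X / (fps_exp (1::real) - 1) = (1 * fps_X) / (Gf * fps_X)"
    by (simp add: Gf_eq mult.commute)
  also have "\<dots> = 1 / Gf" by (rule fps_divide_cancel) simp
  also have "\<dots> = inverse Gf" by (subst fps_divide_unit) (simp_all add: Gf_def)
  finally show ?thesis by (simp add: Gf_def inverse_mult_eq_1)
qed

lemma geom: "(fps_exp (1::real) - 1) * (\<Sum>i<k. fps_exp (real i)) = fps_exp (real k) - 1"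
proof (induction k)
  case 0 then show ?case by simp
next
  case (Suc k)
  have "fps_exp (real (Suc k)) = fps_exp 1 * fps_exp (real k)"
    by (simp add: fps_exp_add_mult[symmetric] add.commute)
  then show ?case using Suc by (simp add: distrib_left algebra_simps)
qed

lemma faulhaber:
  "(\<Sum>i<k. real i ^ j) = (\<Sum>l=0..j. fact j * beta l / fact (j+1-l) * real k ^ (j+1-l))"
proof -
  define S where "S = (\<Sum>i<k. fps_exp (real i))"
  have "fps_X * (Gf * S) = fps_X * Ef (real k)"
    using geom[of k] unfolding S_def Ef_eq by (simp add: mult.assoc Gf_def Ef_def)
  then have GS: "Gf * S = Ef (real k)" by simp
  have "S = (fps_X / (fps_exp (1::real) - 1) * Gf) * S" by (simp add: beta_Gf)
  also have "\<dots> = fps_X / (fps_exp (1::real) - 1) * Ef (real k)" by (simp add: mult.assoc GS)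
  finally have "fps_nth S j = fps_nth (fps_X / (fps_exp (1::real) - 1) * Ef (real k)) j" by simp
  then have "(\<Sum>i<k. real i ^ j / fact j) = (\<Sum>l=0..j. beta l * (real k ^ (j - l + 1) / fact (j - l + 1)))"
    by (simp add: S_def fps_sum_nth fps_mult_nth beta_def Ef_def)
  then have "fact j * (\<Sum>i<k. real i ^ j / fact j) = fact j * (\<Sum>l=0..j. beta l * (real k ^ (j - l + 1) / fact (j - l + 1)))"
    by simp
  moreover have "fact j * (\<Sum>i<k. real i ^ j / fact j) = (\<Sum>i<k. real i ^ j)"
    by (simp add: sum_distrib_left)
  moreover have "fact j * (\<Sum>l=0..j. beta l * (real k ^ (j - l + 1) / fact (j - l + 1)))
     = (\<Sum>l=0..j. fact j * beta l / fact (j+1-l) * real k ^ (j+1-l))"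
    unfolding sum_distrib_left by (rule sum.cong) (auto simp: Suc_diff_le)
  ultimately show ?thesis by simp
qed
definition f :: "nat \<Rightarrow> (nat \<Rightarrow> real) \<Rightarrow> real" where
  "f N p = (\<Sum>k\<le>N. (-1)^k * real (N choose k) * p k)"

lemma f_Suc: "f (Suc N) p = f N p - f N (\<lambda>k. p (Suc k))"
proof -
  define h where "h k = (-1)^k * real (N choose k) * p k" for k
  have sh: "(\<Sum>k\<le>N. h (Suc k)) = f N p - p 0"
  proof -
    have "(\<Sum>k\<le>Suc N. h k) = h 0 + (\<Sum>k\<le>N. h (Suc k))" by (rule sum.atMost_Suc_shift)
    moreover have "(\<Sum>k\<le>Suc N. h k) = f N p" by (simp add: h_def f_def)
    ultimately show ?thesis by (simp add: h_def)
  qed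
  have "f (Suc N) p = p 0 + (\<Sum>k\<le>N. (-1)^(Suc k) * real (Suc N choose Suc k) * p (Suc k))"
    unfolding f_def by (subst sum.atMost_Suc_shift) simp
  also have "\<dots> = p 0 + (\<Sum>k\<le>N. h (Suc k) - (-1)^k * real (N choose k) * p (Suc k))"
    by (rule arg_cong[where f="\<lambda>x. p 0 + x"], rule sum.cong) (simp_all add: h_def algebra_simps)
  also have "\<dots> = f N p - f N (\<lambda>k. p (Suc k))"
    by (simp add: sum_subtractf sh f_def)
  finally show ?thesis .
qed

lemma f_lin: "f N (\<lambda>k. \<Sum>l\<in>A. c l * g l k) = (\<Sum>l\<in>A. c l * f N (g l))"
  unfolding f_def by (simp add: sum_distrib_left sum_distrib_right mult_ac sum.swap[of _ A])

lemma altsum: "j < N \<Longrightarrow> f N (\<lambda>k. real k ^ j) = 0"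
proof (induction N arbitrary: j)
  case 0 then show ?case by simp
next
  case (Suc N)
  have bin: "real (Suc k) ^ j = (\<Sum>l\<le>j. real (j choose l) * real k ^ l)" for k
    using binomial_ring[of "real k" 1 j] by (simp add: add.commute)
  have "f N (\<lambda>k. real (Suc k) ^ j) = (\<Sum>l\<le>j. real (j choose l) * f N (\<lambda>k. real k ^ l))"
    unfolding bin by (rule f_lin)
  also have "\<dots> = (\<Sum>l<j. real (j choose l) * f N (\<lambda>k. real k ^ l)) + f N (\<lambda>k. real k ^ j)"
    by (simp add: lessThan_Suc_atMost[symmetric])
  also have "(\<Sum>l<j. real (j choose l) * f N (\<lambda>k. real k ^ l)) = 0"
    using Suc by (intro sum.neutral) auto
  finally show ?case by (simp add: f_Suc)
qed

definition W :: "nat \<Rightarrow> nat \<Rightarrow> real" where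
  "W N k = (-1)^(k+1) / real k * real (N choose k)"
definition L :: "nat \<Rightarrow> (nat \<Rightarrow> real) \<Rightarrow> real" where
  "L N g = (\<Sum>k=1..N. W N k * g k)"

lemma L_lin: "L N (\<lambda>k. \<Sum>l\<in>A. c l * g l k) = (\<Sum>l\<in>A. c l * L N (g l))"
  unfolding L_def by (simp add: sum_distrib_left sum_distrib_right mult_ac sum.swap[of _ A])

lemma L_diff: "L N (\<lambda>k. g k - h k) = L N g - L N h"
  unfolding L_def by (simp add: sum_subtractf right_diff_distrib)

lemma L_add: "L N (\<lambda>k. g k + h k) = L N g + L N h"
  unfolding L_def by (simp add: sum.distrib distrib_left)

lemma L_cong: "(\<And>k. 1 \<le> k \<Longrightarrow> g k = h k) \<Longrightarrow> L N g = L N h"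
  unfolding L_def by (intro sum.cong) auto

lemma Lpow: assumes "1 \<le> p" "p \<le> N"
  shows "L N (\<lambda>k. real k ^ p) = (if p = 1 then 1 else 0)"
proof -
  have "f N (\<lambda>k. real k ^ (p - 1)) = 0" using assms by (intro altsum) auto
  then have "(if p = 1 then 1 else 0) + (\<Sum>k=1..N. (-1)^k * real (N choose k) * real k ^ (p - 1)) = 0"
    unfolding f_def atMost_atLeast0 using assms
    by (subst (asm) sum.atLeast_Suc_atMost) (auto simp: power_0_left)
  moreover have "L N (\<lambda>k. real k ^ p) = - (\<Sum>k=1..N. (-1)^k * real (N choose k) * real k ^ (p - 1))"
    unfolding L_def W_def sum_negf[symmetric]
  proof (rule sum.cong)
    fix k assume "k \<in> {1..N}"
    then have "real k ^ p = real k * real k ^ (p - 1)" using assms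
      by (metis One_nat_def Suc_le_lessD power_Suc Suc_pred' le0 less_le_trans zero_less_one)
    then show "(-1)^(k+1) / real k * real (N choose k) * real k ^ p = - ((-1)^k * real (N choose k) * real k ^ (p - 1))"
      using \<open>k \<in> {1..N}\<close> by simp
  qed simp
  ultimately show ?thesis by linarith
qed

definition T :: "nat \<Rightarrow> nat \<Rightarrow> nat \<Rightarrow> real" where
  "T a b k = (\<Sum>i=1..k-1. real i ^ a * real (k - i) ^ b)"

lemma sum_from1: "1 \<le> k \<Longrightarrow> (\<Sum>i=1..k-1. real i ^ e) = (\<Sum>i<k. real i ^ e) - (if e = 0 then 1 else 0)"
proof -
  assume k: "1 \<le> k"
  have "{..<k} = {0..k-1}" using k by auto
  then have "(\<Sum>i<k. real i ^ e) = (if e = 0 then 1 else 0) + (\<Sum>i=1..k-1. real i ^ e)"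
    by (simp add: sum.atLeast_Suc_atMost)
  then show ?thesis by simp
qed

lemma Texp: assumes "1 \<le> k"
  shows "T a b k = (\<Sum>t\<le>b. (real (b choose t) * (-1)^(b-t)) * (real k ^ t * (\<Sum>i<k. real i ^ (a+b-t))))
     - (if a = 0 then real k ^ b else 0)"
proof -
  have "T a b k = (\<Sum>i=1..k-1. \<Sum>t\<le>b. (real (b choose t) * (-1)^(b-t)) * (real k ^ t * real i ^ (a+b-t)))"
    unfolding T_def
  proof (rule sum.cong)
    fix i assume i: "i \<in> {1..k-1}"
    have "real (k - i) = real k + (- real i)" using i by auto
    have "real (k - i) ^ b = (\<Sum>t\<le>b. real (b choose t) * real k ^ t * (- real i) ^ (b - t))"
      unfolding \<open>real (k - i) = real k + (- real i)\<close> by (rule binomial_ring)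
    then have "real i ^ a * real (k - i) ^ b = (\<Sum>t\<le>b. real i ^ a * (real (b choose t) * real k ^ t * (- real i) ^ (b - t)))"
      by (simp add: sum_distrib_left)
    also have "\<dots> = (\<Sum>t\<le>b. (real (b choose t) * (-1)^(b-t)) * (real k ^ t * real i ^ (a+b-t)))"
    proof (rule sum.cong)
      fix t assume "t \<in> {..b}"
      then have "a + b - t = a + (b - t)" by auto
      then show "real i ^ a * (real (b choose t) * real k ^ t * (- real i) ^ (b - t)) =
        (real (b choose t) * (-1)^(b-t)) * (real k ^ t * real i ^ (a+b-t))"
        by (simp add: power_add power_minus[of "real i"] mult_ac)
    qed simp
    finally show "real i ^ a * real (k - i) ^ b = (\<Sum>t\<le>b. (real (b choose t) * (-1)^(b-t)) * (real k ^ t * real i ^ (a+b-t)))" .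
  qed simp
  also have "\<dots> = (\<Sum>t\<le>b. (real (b choose t) * (-1)^(b-t)) * (real k ^ t * (\<Sum>i=1..k-1. real i ^ (a+b-t))))"
    by (simp add: sum_distrib_left, rule sum.swap)
  also have "\<dots> = (\<Sum>t\<le>b. (real (b choose t) * (-1)^(b-t)) * (real k ^ t * (\<Sum>i<k. real i ^ (a+b-t)))
       - (real (b choose t) * (-1)^(b-t)) * (real k ^ t * (if a+b-t = 0 then 1 else 0)))"
    using assms by (intro sum.cong refl) (simp only: sum_from1[OF assms] right_diff_distrib)
  finally have TT: "T a b k = (\<Sum>t\<le>b. (real (b choose t) * (-1)^(b-t)) * (real k ^ t * (\<Sum>i<k. real i ^ (a+b-t)))
       - (real (b choose t) * (-1)^(b-t)) * (real k ^ t * (if a+b-t = 0 then 1 else 0)))" .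
  have "(\<Sum>t\<le>b. (real (b choose t) * (-1)^(b-t)) * (real k ^ t * (if a+b-t = 0 then 1 else 0)))
     = (if a = 0 then real k ^ b else 0)"
  proof (cases "a = 0")
    case True
    have "(\<Sum>t\<le>b. (real (b choose t) * (-1)^(b-t)) * (real k ^ t * (if a+b-t = 0 then 1 else 0)))
       = (\<Sum>t\<le>b. (if t = b then real k ^ b else 0))"
      using True by (intro sum.cong) auto
    then show ?thesis using True by simp
  next
    case False
    then show ?thesis by (intro trans[OF sum.neutral]) auto
  qed
  with TT show ?thesis by (simp add: sum_subtractf)
qed

lemma bern_beta: "bernoulli l = fact l * beta l"
  by (simp add: bernoulli_def beta_def)

lemma inner: assumes "t \<le> m" "m < N"
  shows "L N (\<lambda>k. real k ^ t * (\<Sum>i<k. real i ^ (m - t))) = (if t = 0 then bernoulli m else 0)"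
proof -
  define j where "j = m - t"
  define d where "d l = fact j * beta l / fact (j+1-l)" for l
  have "L N (\<lambda>k. real k ^ t * (\<Sum>i<k. real i ^ (m - t))) = L N (\<lambda>k. \<Sum>l=0..j. d l * real k ^ (t + (j+1-l)))"
    unfolding j_def[symmetric] faulhaber d_def sum_distrib_left
  proof (intro L_cong sum.cong refl)
    fix k l assume "l \<in> {0..j}"
    then have "l \<le> j" by simp
    have e: "real k ^ t * real k ^ (j + 1 - l) = real k ^ (t + (j+1-l))" by (simp only: power_add)
    then show "real k ^ t * (fact j * beta l / fact (j + 1 - l) * real k ^ (j + 1 - l)) =
         fact j * beta l / fact (j + 1 - l) * real k ^ (t + (j + 1 - l))"
      unfolding e[symmetric] by (simp only: mult_ac)
  qed
  also have "\<dots> = (\<Sum>l=0..j. d l * L N (\<lambda>k. real k ^ (t + (j+1-l))))" by (rule L_lin)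
  also have "\<dots> = (\<Sum>l=0..j. d l * (if t = 0 \<and> l = j then 1 else 0))"
    using assms by (intro sum.cong refl) (subst Lpow, auto simp: j_def)
  also have "\<dots> = (if t = 0 then bernoulli m else 0)"
  proof (cases "t = 0")
    case True
    then show ?thesis
      by (subst sum.remove[of _ j]) (auto intro!: sum.neutral simp: d_def bern_beta j_def)
  qed simp
  finally show ?thesis .
qed

lemma mainlem: assumes "a + b = m" "m < N"
  shows "L N (T a b) + (if a = 0 then L N (\<lambda>k. real k ^ m) else 0) = (-1)^b * bernoulli m"
proof -
  have "L N (T a b) = L N (\<lambda>k. (\<Sum>t\<le>b. (real (b choose t) * (-1)^(b-t)) * (real k ^ t * (\<Sum>i<k. real i ^ (m-t))))
     - (if a = 0 then real k ^ m else 0))"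
    using assms by (intro L_cong) (auto simp: Texp)
  also have "\<dots> = (\<Sum>t\<le>b. (real (b choose t) * (-1)^(b-t)) * L N (\<lambda>k. real k ^ t * (\<Sum>i<k. real i ^ (m-t))))
     - L N (\<lambda>k. if a = 0 then real k ^ m else 0)"
    by (simp add: L_diff L_lin)
  also have "(\<Sum>t\<le>b. (real (b choose t) * (-1)^(b-t)) * L N (\<lambda>k. real k ^ t * (\<Sum>i<k. real i ^ (m-t))))
      = (\<Sum>t\<le>b. (real (b choose t) * (-1)^(b-t)) * (if t = 0 then bernoulli m else 0))"
    using assms by (intro sum.cong refl) (simp add: inner)
  also have "\<dots> = (-1)^b * bernoulli m"
    by (subst sum.remove[of _ 0]) (auto intro!: sum.neutral)
  also have "L N (\<lambda>k. if a = 0 then real k ^ m else 0) = (if a = 0 then L N (\<lambda>k. real k ^ m) else 0)"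
    by (simp add: L_def)
  finally show ?thesis by simp
qed

lemma T_sym: "T a b k = T b a k"
  unfolding T_def
  by (rule sum.reindex_bij_witness[of _ "\<lambda>i. k - i" "\<lambda>i. k - i"]) (auto simp: of_nat_diff mult.commute)

lemma B0: "bernoulli 0 = 1"
proof -
  have "(\<Sum>i<1. real i ^ 0) = (\<Sum>l=0..0. fact 0 * beta l / fact (0+1-l) * real 1 ^ (0+1-l))"
    by (rule faulhaber)
  then show ?thesis by (simp add: bern_beta)
qed

lemma B1: "bernoulli 1 = -1/2"
proof -
  have "(\<Sum>i<1. real i ^ 1) = (\<Sum>l=0..1. fact 1 * beta l / fact (1+1-l) * real 1 ^ (1+1-l))"
    by (rule faulhaber)
  then show ?thesis using B0 by (simp add: bern_beta)
qed

lemma Bodd: assumes "odd m" "3 \<le> m" shows "bernoulli m = 0"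
proof -
  have z: "L (Suc m) (\<lambda>k. real k ^ m) = 0" using assms by (subst Lpow) auto
  have "L (Suc m) (T 0 m) + L (Suc m) (\<lambda>k. real k ^ m) = (-1)^m * bernoulli m"
    using mainlem[of 0 m m "Suc m"] by simp
  moreover have "L (Suc m) (T m 0) = bernoulli m"
    using mainlem[of m 0 m "Suc m"] assms by simp
  moreover have "T 0 m = T m 0" using T_sym by blast
  ultimately show ?thesis using z assms by simp
qed

lemma Bsign: "m \<noteq> 1 \<Longrightarrow> (-1)^m * bernoulli m = bernoulli m"
proof (cases "even m")
  case False
  moreover assume "m \<noteq> 1"
  ultimately have "3 \<le> m" by presburger
  with False show ?thesis by (simp add: Bodd)
qed simp

theorem theorem2:
  fixes m n a :: nat
  assumes "a \<le> m" and "m \<le> n"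
  shows "(bernoulli m = (-1) ^ a * (\<Sum>k=1..n+1. ((-1) ^ (k+1) / real k) * real (Suc n choose k) *
            ((\<Sum>i=1..k-1. real i ^ a * real (k - i) ^ (m - a)) + (if a = m then real k ^ m else 0)))) \<and>
         (m \<ge> 2 \<longrightarrow> bernoulli m = (-1) ^ a * (\<Sum>k=1..n+1. ((-1) ^ (k+1) / real k) * real (Suc n choose k) *
            (\<Sum>i=1..k-1. real i ^ a * real (k - i) ^ (m - a))))"
proof -
  define b where "b = m - a"
  have ab: "a + b = m" using assms b_def by simp
  have mN: "m < Suc n" using assms by simp
  have e1: "(\<Sum>k=1..n+1. ((-1) ^ (k+1) / real k) * real (Suc n choose k) *
            ((\<Sum>i=1..k-1. real i ^ a * real (k - i) ^ (m - a)) + (if a = m then real k ^ m else 0)))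
     = L (Suc n) (T a b) + (if a = m then L (Suc n) (\<lambda>k. real k ^ m) else 0)"
  proof -
    have "(\<Sum>k=1..n+1. ((-1) ^ (k+1) / real k) * real (Suc n choose k) *
            ((\<Sum>i=1..k-1. real i ^ a * real (k - i) ^ (m - a)) + (if a = m then real k ^ m else 0)))
      = L (Suc n) (\<lambda>k. T a b k + (if a = m then real k ^ m else 0))"
      by (simp add: L_def W_def T_def b_def)
    also have "\<dots> = L (Suc n) (T a b) + L (Suc n) (\<lambda>k. if a = m then real k ^ m else 0)"
      by (rule L_add)
    also have "L (Suc n) (\<lambda>k. if a = m then real k ^ m else 0) = (if a = m then L (Suc n) (\<lambda>k. real k ^ m) else 0)"
      by (simp add: L_def)
    finally show ?thesis .
  qed
  have e2: "(\<Sum>k=1..n+1. ((-1) ^ (k+1) / real k) * real (Suc n choose k) *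
            (\<Sum>i=1..k-1. real i ^ a * real (k - i) ^ (m - a))) = L (Suc n) (T a b)"
    by (simp add: L_def W_def T_def b_def)
  have M: "L (Suc n) (T a b) + (if a = 0 then L (Suc n) (\<lambda>k. real k ^ m) else 0) = (-1)^b * bernoulli m"
    by (rule mainlem[OF ab mN])
  have sg: "(-1)^a * ((-1)^b * bernoulli m) = (-1)^m * bernoulli m"
    using ab by (simp add: power_add[symmetric])
  have P2: "m \<ge> 2 \<Longrightarrow> bernoulli m = (-1)^a * L (Suc n) (T a b)"
  proof -
    assume m2: "m \<ge> 2"
    have "L (Suc n) (\<lambda>k. real k ^ m) = 0" using m2 assms by (subst Lpow) auto
    moreover have "(if a = 0 then L (Suc n) (\<lambda>k. real k ^ m) else 0) = 0" using calculation by simp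
    ultimately have "L (Suc n) (T a b) = (-1)^b * bernoulli m" using M by linarith
    then show ?thesis using sg Bsign[of m] m2 by simp
  qed
  have P1: "bernoulli m = (-1)^a * (L (Suc n) (T a b) + (if a = m then L (Suc n) (\<lambda>k. real k ^ m) else 0))"
  proof (cases "m \<ge> 2")
    case True
    have "L (Suc n) (\<lambda>k. real k ^ m) = 0" using True assms by (subst Lpow) auto
    then show ?thesis using P2 True by simp
  next
    case False
    then consider "m = 0" | "m = 1" by linarith
    then show ?thesis
    proof cases
      case 1
      then show ?thesis using M ab B0 by simp
    next
      case 2
      have l1: "L (Suc n) (\<lambda>k. real k ^ m) = 1" using 2 assms by (subst Lpow) auto
      have "a = 0 \<or> a = 1" using 2 assms by auto
      then show ?thesis using M ab l1 B1 2 by auto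
    qed
  qed
  show ?thesis using e1 e2 P1 P2 by simp
qed

end
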